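(* Let $\mu,\nu>0$; for integers $N>\max(\mu,\nu)$ let $v=\mu/N$, $w=\nu/N$, $S=\{0,\dots,N\}$ and \[ P_{ij}=(1-v)^{N-i}(1-w)^i\sum_{\substack{\ell,m\ge0:\ \ell-m=j-i}}\binom{N-i}{\ell}\binom{i}{m}\Big(\frac v{1-v}\Big)^\ell\Big(\frac w{1-w}\Big)^m. \] Let $g(z)=(\sqrt{\mu(1-z)}-\sqrt{\nu z})^2$ for $z\in[0,1]$. Then for all $i\in S$, \[ \sum_{j\in S}\sqrt{P_{ij}P_{ji}}\le e^{-g(i/N)}+\mathcal{O}(1/\sqrt N), \] where the $\mathcal{O}(1/\sqrt N)$ term depends on $\mu$ and $\nu$ but not on $i$ (i.e. there is $C=C(\mu,\nu)$ with the bound $e^{-g(i/N)}+C/\sqrt N$ for all such $N$ and all $i\in S$).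
   Context: $P_{ij}$ is the probability that a sequence in $\{0,1\}^N$ with $i$ ones, mutated independently at each site ($0\to1$ with probability $v$, $1\to0$ with probability $w$), ends up with $j$ ones. *)

theory Defs
  imports "HOL-Analysis.Analysis"
begin

text \<open>Transition probability P_{ij} of the mutation chain on {0..N}, with v, w the
per-site mutation probabilities (0 to 1 with prob. v, 1 to 0 with prob. w).\<close>
definition mutP :: "nat \<Rightarrow> real \<Rightarrow> real \<Rightarrow> nat \<Rightarrow> nat \<Rightarrow> real" where
  "mutP N v w i j =
     (1 - v) ^ (N - i) * (1 - w) ^ i *
     (\<Sum>l\<in>{0..N - i}. \<Sum>m\<in>{0..i}.
        if int l - int m = int j - int i
        then real ((N - i) choose l) * real (i choose m) * (v / (1 - v)) ^ l * (w / (1 - w)) ^ m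
        else 0)"

definition gfun :: "real \<Rightarrow> real \<Rightarrow> real \<Rightarrow> real" where
  "gfun \<mu> \<nu> z = (sqrt (\<mu> * (1 - z)) - sqrt (\<nu> * z))\<^sup>2"

end

theory Submission
  imports Defs
begin

lemma exp_partial:
  fixes y :: real assumes "0 \<le> y"
  shows "(\<Sum>l\<in>{0..n}. y ^ l / fact l) \<le> exp y"
proof -
  have s: "summable (\<lambda>l. y ^ l / fact l)" using summable_exp[of y] by (simp add: inverse_eq_divide)
  have "(\<Sum>l<Suc n. y ^ l / fact l) \<le> (\<Sum>l. y ^ l / fact l)"
    by (rule sum_le_suminf[OF s]) (auto simp: assms)
  also have "\<dots> = exp y" by (simp add: exp_def inverse_eq_divide)
  finally show ?thesis by (simp add: atLeast0AtMost lessThan_Suc_atMost)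
qed

lemma pow_diff_le:
  fixes s x D :: real
  assumes "0 \<le> s" "s \<le> x" "x \<le> D" "1 \<le> D"
  shows "x ^ l - s ^ l \<le> real l * (x - s) * D ^ l"
proof (induction l)
  case 0 then show ?case by simp
next
  case (Suc l)
  have "x ^ Suc l - s ^ Suc l = x * (x ^ l - s ^ l) + s ^ l * (x - s)" by (simp add: algebra_simps)
  also have "\<dots> \<le> D * (real l * (x - s) * D ^ l) + D ^ Suc l * (x - s)"
  proof (rule add_mono)
    show "x * (x ^ l - s ^ l) \<le> D * (real l * (x - s) * D ^ l)"
      using Suc assms by (intro mult_mono) (auto intro!: power_mono simp: algebra_simps)
    have "s ^ l \<le> D ^ l" using assms by (intro power_mono) auto
    also have "\<dots> \<le> D ^ Suc l" using assms by (simp add: power_increasing)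
    finally show "s ^ l * (x - s) \<le> D ^ Suc l * (x - s)" using assms by (intro mult_right_mono) auto
  qed
  also have "\<dots> = real (Suc l) * (x - s) * D ^ Suc l" by (simp add: algebra_simps)
  finally show ?case .
qed

lemma sq_le_four_pow: "real l ^ 2 \<le> 4 ^ l"
proof -
  have "real l \<le> 2 ^ l" using less_exp[of l] by (metis of_nat_le_iff of_nat_less_imp_less less_imp_le of_nat_numeral of_nat_power)
  then have "real l ^ 2 \<le> (2 ^ l) ^ 2" by (intro power_mono) auto
  also have "\<dots> = 4 ^ l" by (simp add: power2_eq_square flip: power_mult_distrib)
  finally show ?thesis .
qed

lemma sqrt_le_self1: fixes x :: real assumes "1 \<le> x" shows "sqrt x \<le> x"
proof -
  have "sqrt x * 1 \<le> sqrt x * sqrt x" using assms by (intro mult_left_mono) auto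
  then show ?thesis using assms by simp
qed

lemma seriesA:
  fixes s b c :: real and N n :: nat
  assumes s0: "0 \<le> s" and sb: "s \<le> b" and c0: "0 \<le> c" and cN: "c \<le> real N" and N0: "N > 0" and nN: "n \<le> N"
  shows "(\<Sum>l\<in>{0..n}. ((s + b * sqrt (real l / real N)) * exp (c / real N)) ^ l / fact l)
         \<le> exp s + (b * exp 1 * c + b * exp 1) * exp (4 * (2 * b * exp 1 + 1)) / sqrt (real N)"
proof -
  define H where "H = b * exp 1 * c + b * exp 1"
  define D where "D = 2 * b * exp 1 + 1"
  have b0: "0 \<le> b" using s0 sb by linarith
  have Npos: "real N > 0" using N0 by simp
  have sqN: "sqrt (real N) > 0" using Npos by simp
  have cN1: "c / real N \<le> 1" using cN Npos by (simp add: divide_le_eq)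
  have cN0: "0 \<le> c / real N" using c0 Npos by simp
  have ec1: "exp (c / real N) \<le> exp 1" using cN1 by simp
  have ec0: "1 \<le> exp (c / real N)" using cN0 by simp
  have em1: "exp (c / real N) - 1 \<le> (c / real N) * exp (c / real N)"
  proof -
    have "1 - c / real N \<le> exp (- (c / real N))" using exp_ge_add_one_self[of "- (c / real N)"] by simp
    then have "(1 - c / real N) * exp (c / real N) \<le> exp (- (c / real N)) * exp (c / real N)"
      by (intro mult_right_mono) auto
    then show ?thesis by (simp add: algebra_simps exp_minus field_simps)
  qed
  have cNs: "c / real N \<le> c / sqrt (real N)"
  proof -
    have "sqrt (real N) \<le> real N" using N0 by (intro sqrt_le_self1) simp
    then show ?thesis using c0 sqN by (intro divide_left_mono) auto
  qed
  have termb: "((s + b * sqrt (real l / real N)) * exp (c / real N)) ^ l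
              \<le> s ^ l + H * (4 * D) ^ l / sqrt (real N)" if lN: "l \<le> N" for l
  proof -
    define x where "x = (s + b * sqrt (real l / real N)) * exp (c / real N)"
    have sq1: "sqrt (real l / real N) \<le> 1" using lN Npos by (simp add: divide_le_eq)
    have sq0: "0 \<le> sqrt (real l / real N)" by simp
    have sx: "s \<le> x" unfolding x_def
    proof -
      have "s \<le> s + b * sqrt (real l / real N)" using b0 by simp
      also have "\<dots> \<le> (s + b * sqrt (real l / real N)) * exp (c / real N)"
        using mult_left_mono[OF ec0, of "s + b * sqrt (real l / real N)"] s0 b0 by simp
      finally show "s \<le> (s + b * sqrt (real l / real N)) * exp (c / real N)" .
    qed
    have xD: "x \<le> D" unfolding x_def D_def
    proof -
      have "(s + b * sqrt (real l / real N)) * exp (c / real N) \<le> (b + b * 1) * exp 1"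
        using sb b0 sq1 ec1 s0 by (intro mult_mono add_mono mult_left_mono) auto
      then show "(s + b * sqrt (real l / real N)) * exp (c / real N) \<le> 2 * b * exp 1 + 1" by simp
    qed
    have D1: "1 \<le> D" unfolding D_def using b0 by simp
    have diff: "x ^ l - s ^ l \<le> real l * (x - s) * D ^ l" using pow_diff_le[OF s0 sx xD D1] .
    have lx: "real l * (x - s) \<le> H * real l ^ 2 / sqrt (real N)"
    proof (cases "l = 0")
      case True then show ?thesis by simp
    next
      case False
      then have l1: "1 \<le> real l" by simp
      have "x - s = s * (exp (c / real N) - 1) + b * sqrt (real l / real N) * exp (c / real N)"
        unfolding x_def by (simp add: algebra_simps)
      also have "\<dots> \<le> b * ((c / real N) * exp 1) + b * (real l / sqrt (real N)) * exp 1"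
      proof (rule add_mono)
        have e1: "exp (c / real N) - 1 \<le> (c / real N) * exp 1"
          using em1 mult_left_mono[OF ec1 cN0] by linarith
        have e0: "0 \<le> exp (c / real N) - 1" using ec0 by simp
        show "s * (exp (c / real N) - 1) \<le> b * ((c / real N) * exp 1)"
          by (rule mult_mono[OF sb e1 b0 e0])
        have "sqrt (real l / real N) = sqrt (real l) / sqrt (real N)" by (simp add: real_sqrt_divide)
        also have "\<dots> \<le> real l / sqrt (real N)"
          using l1 sqN by (intro divide_right_mono) (auto intro: sqrt_le_self1)
        finally have q: "b * sqrt (real l / real N) \<le> b * (real l / sqrt (real N))"
          by (rule mult_left_mono) (rule b0)
        show "b * sqrt (real l / real N) * exp (c / real N) \<le> b * (real l / sqrt (real N)) * exp 1"
          by (rule mult_mono[OF q ec1]) (use b0 l1 sqN in auto)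
      qed
      also have "\<dots> \<le> b * ((c / sqrt (real N) * real l) * exp 1) + b * (real l / sqrt (real N)) * exp 1"
      proof -
        have "c / sqrt (real N) * 1 \<le> c / sqrt (real N) * real l"
          by (rule mult_left_mono[OF l1]) (use c0 sqN in simp)
        then have "c / real N \<le> c / sqrt (real N) * real l" using cNs by simp
        then have "(c / real N) * exp 1 \<le> (c / sqrt (real N) * real l) * exp 1"
          by (rule mult_right_mono) simp
        then have "b * ((c / real N) * exp 1) \<le> b * ((c / sqrt (real N) * real l) * exp 1)"
          by (rule mult_left_mono) (rule b0)
        then show ?thesis by simp
      qed
      also have "\<dots> = H * real l / sqrt (real N)" unfolding H_def by (simp add: algebra_simps add_divide_distrib)
      finally have "x - s \<le> H * real l / sqrt (real N)" .
      then have "real l * (x - s) \<le> real l * (H * real l / sqrt (real N))" by (intro mult_left_mono) auto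
      then show ?thesis by (simp add: power2_eq_square mult_ac)
    qed
    have H0: "0 \<le> H" unfolding H_def using b0 c0 by simp
    have "x ^ l \<le> s ^ l + real l * (x - s) * D ^ l" using diff by simp
    also have "\<dots> \<le> s ^ l + H * real l ^ 2 / sqrt (real N) * D ^ l"
      using lx D1 by (intro add_left_mono mult_right_mono) auto
    also have "\<dots> \<le> s ^ l + H * 4 ^ l / sqrt (real N) * D ^ l"
      using sq_le_four_pow[of l] H0 sqN D1
      by (intro add_left_mono mult_right_mono divide_right_mono mult_left_mono) auto
    also have "\<dots> = s ^ l + H * (4 * D) ^ l / sqrt (real N)" by (simp add: power_mult_distrib)
    finally show ?thesis unfolding x_def .
  qed
  have "(\<Sum>l\<in>{0..n}. ((s + b * sqrt (real l / real N)) * exp (c / real N)) ^ l / fact l)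
        \<le> (\<Sum>l\<in>{0..n}. s ^ l / fact l + H / sqrt (real N) * ((4 * D) ^ l / fact l))"
  proof (rule sum_mono)
    fix l assume "l \<in> {0..n}"
    then have "l \<le> N" using nN by simp
    have "((s + b * sqrt (real l / real N)) * exp (c / real N)) ^ l / fact l
        \<le> (s ^ l + H * (4 * D) ^ l / sqrt (real N)) / fact l"
      by (rule divide_right_mono[OF termb[OF \<open>l \<le> N\<close>]]) simp
    also have "\<dots> = s ^ l / fact l + H / sqrt (real N) * ((4 * D) ^ l / fact l)"
      by (simp add: add_divide_distrib)
    finally show "((s + b * sqrt (real l / real N)) * exp (c / real N)) ^ l / fact l
        \<le> s ^ l / fact l + H / sqrt (real N) * ((4 * D) ^ l / fact l)" .
  qed
  also have "\<dots> = (\<Sum>l\<in>{0..n}. s ^ l / fact l) + H / sqrt (real N) * (\<Sum>l\<in>{0..n}. (4 * D) ^ l / fact l)"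
    by (simp add: sum.distrib sum_distrib_left)
  also have "\<dots> \<le> exp s + H / sqrt (real N) * exp (4 * D)"
    using exp_partial[OF s0, of n] exp_partial[of "4 * D" n] b0 c0 sqN unfolding D_def H_def
    by (intro add_mono mult_left_mono) auto
  finally show ?thesis unfolding H_def D_def by simp
qed


definition tt :: "nat \<Rightarrow> real \<Rightarrow> real \<Rightarrow> nat \<Rightarrow> nat \<Rightarrow> nat \<Rightarrow> real" where
  "tt N v w k l m = real ((N - k) choose l) * real (k choose m) * v ^ l * (1 - v) ^ (N - k - l)
                     * w ^ m * (1 - w) ^ (k - m)"

lemma mutP_tt:
  assumes "v \<noteq> 1" "w \<noteq> 1"
  shows "mutP N v w k j = (\<Sum>l\<in>{0..N - k}. \<Sum>m\<in>{0..k}.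
            if int l - int m = int j - int k then tt N v w k l m else 0)"
  unfolding mutP_def sum_distrib_left
proof (intro sum.cong refl)
  fix l m assume l: "l \<in> {0..N - k}" and m: "m \<in> {0..k}"
  have v1: "1 - v \<noteq> 0" and w1: "1 - w \<noteq> 0" using assms by auto
  have n1: "N - k = (N - k - l) + l" using l by simp
  have n2: "k = (k - m) + m" using m by simp
  have e1: "(1 - v) ^ (N - k) = (1 - v) ^ (N - k - l) * (1 - v) ^ l"
    by (subst n1) (simp only: power_add)
  have e2: "(1 - w) ^ k = (1 - w) ^ (k - m) * (1 - w) ^ m"
    by (subst n2) (simp only: power_add)
  show "(1 - v) ^ (N - k) * (1 - w) ^ k *
        (if int l - int m = int j - int k
         then real (N - k choose l) * real (k choose m) * (v / (1 - v)) ^ l * (w / (1 - w)) ^ m else 0) =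
        (if int l - int m = int j - int k then tt N v w k l m else 0)"
    unfolding tt_def e1 e2 using v1 w1 by (simp add: power_divide field_simps)
qed

lemma dsum_if:
  "(\<Sum>l\<in>A. \<Sum>m\<in>B. if P l m then f l m else 0 :: real) =
   (\<Sum>p\<in>{p \<in> A \<times> B. P (fst p) (snd p)}. f (fst p) (snd p))" if "finite A" "finite B"
proof -
  have "(\<Sum>l\<in>A. \<Sum>m\<in>B. if P l m then f l m else 0 :: real) =
        (\<Sum>p\<in>A \<times> B. if P (fst p) (snd p) then f (fst p) (snd p) else 0)"
    by (simp add: sum.cartesian_product case_prod_beta)
  also have "\<dots> = (\<Sum>p\<in>{p \<in> A \<times> B. P (fst p) (snd p)}. f (fst p) (snd p))"
    using that by (simp add: sum.inter_filter)
  finally show ?thesis .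
qed

lemma multinom_nat:
  fixes a b c d :: nat
  shows "((a+b+c+d) choose (b+d)) * ((a+c) choose c) * ((b+d) choose b)
       = ((a+b+c+d) choose (c+d)) * ((a+b) choose b) * ((c+d) choose c)"
proof -
  have 1: "fact b * fact d * ((b+d) choose b) = (fact (b+d)::nat)"
    using binomial_fact_lemma[of b "b+d"] by simp
  have 2: "fact c * fact a * ((a+c) choose c) = (fact (a+c)::nat)"
    using binomial_fact_lemma[of c "a+c"] by simp
  have 3: "fact (b+d) * fact (a+c) * ((a+b+c+d) choose (b+d)) = (fact (a+b+c+d)::nat)"
    using binomial_fact_lemma[of "b+d" "a+b+c+d"] by (simp add: ac_simps)
  have 4: "fact c * fact d * ((c+d) choose c) = (fact (c+d)::nat)"
    using binomial_fact_lemma[of c "c+d"] by simp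
  have 5: "fact b * fact a * ((a+b) choose b) = (fact (a+b)::nat)"
    using binomial_fact_lemma[of b "a+b"] by simp
  have 6: "fact (c+d) * fact (a+b) * ((a+b+c+d) choose (c+d)) = (fact (a+b+c+d)::nat)"
    using binomial_fact_lemma[of "c+d" "a+b+c+d"] by (simp add: ac_simps)
  define F where "F = (fact a * fact b * fact c * fact d :: nat)"
  have L: "((a+b+c+d) choose (b+d)) * ((a+c) choose c) * ((b+d) choose b) * F = fact (a+b+c+d)"
  proof -
    have "((a+b+c+d) choose (b+d)) * ((a+c) choose c) * ((b+d) choose b) * F
        = (fact b * fact d * ((b+d) choose b)) * (fact c * fact a * ((a+c) choose c)) * ((a+b+c+d) choose (b+d))"
      unfolding F_def by (simp only: ac_simps)
    also have "\<dots> = fact (a+b+c+d)" by (simp only: 1 2 3)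
    finally show ?thesis .
  qed
  have R: "((a+b+c+d) choose (c+d)) * ((a+b) choose b) * ((c+d) choose c) * F = fact (a+b+c+d)"
  proof -
    have "((a+b+c+d) choose (c+d)) * ((a+b) choose b) * ((c+d) choose c) * F
        = (fact c * fact d * ((c+d) choose c)) * (fact b * fact a * ((a+b) choose b)) * ((a+b+c+d) choose (c+d))"
      unfolding F_def by (simp only: ac_simps)
    also have "\<dots> = fact (a+b+c+d)" by (simp only: 4 5 6)
    finally show ?thesis .
  qed
  have "F \<noteq> 0" unfolding F_def by simp
  then show ?thesis using L R by (metis mult_right_cancel)
qed

lemma multinom:
  fixes a b c d :: nat
  shows "real ((a+b+c+d) choose (b+d)) * real ((a+c) choose c) * real ((b+d) choose b)
       = real ((a+b+c+d) choose (c+d)) * real ((a+b) choose b) * real ((c+d) choose c)"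
  using arg_cong[OF multinom_nat[of a b c d], of real] by (simp only: of_nat_mult)

definition piw :: "nat \<Rightarrow> real \<Rightarrow> real \<Rightarrow> nat \<Rightarrow> real" where
  "piw N v w k = real (N choose k) * v ^ k * w ^ (N - k)"

lemma ptw:
  fixes a b c d :: nat
  assumes "N = a+b+c+d" "i = c+d" "j = b+d"
  shows "piw N v w j * tt N v w j c b = piw N v w i * tt N v w i b c"
proof -
  have n1: "N - j = a + c" "N - j - c = a" "j - b = d" "N - i = a + b" "N - i - b = a" "i - c = d"
    using assms by auto
  have "piw N v w j * tt N v w j c b =
    (real ((a+b+c+d) choose (b+d)) * real ((a+c) choose c) * real ((b+d) choose b))
      * (v ^ b * v ^ c * v ^ d * (w ^ a * w ^ b * w ^ c) * (1 - v) ^ a * (1 - w) ^ d)"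
    unfolding piw_def tt_def n1 unfolding assms by (simp add: power_add mult_ac)
  also have "\<dots> = (real ((a+b+c+d) choose (c+d)) * real ((a+b) choose b) * real ((c+d) choose c))
      * (v ^ b * v ^ c * v ^ d * (w ^ a * w ^ b * w ^ c) * (1 - v) ^ a * (1 - w) ^ d)"
    by (subst multinom) (rule refl)
  also have "\<dots> = piw N v w i * tt N v w i b c"
    unfolding piw_def tt_def n1 unfolding assms by (simp add: power_add mult_ac)
  finally show ?thesis .
qed


lemma tt_nonneg: "0 \<le> v \<Longrightarrow> v \<le> 1 \<Longrightarrow> 0 \<le> w \<Longrightarrow> w \<le> 1 \<Longrightarrow> 0 \<le> tt N v w k l m"
  unfolding tt_def by simp

lemma piw_pos: "0 < v \<Longrightarrow> 0 < w \<Longrightarrow> j \<le> N \<Longrightarrow> 0 < piw N v w j"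
  unfolding piw_def by simp

lemma ptw2:
  assumes "0 < v" "0 < w" "i \<le> N" "l \<le> N - i" "m \<le> i" "int l - int m = int j - int i"
  shows "tt N v w j m l = (piw N v w i / piw N v w j) * tt N v w i l m"
proof -
  have jN: "j \<le> N" and jj: "j = l + (i - m)" using assms by linarith+
  have "piw N v w j * tt N v w j m l = piw N v w i * tt N v w i l m"
    by (rule ptw[of N "N - i - l" l m "i - m"]) (use assms jj in auto)
  moreover have "0 < piw N v w j" using piw_pos[OF assms(1,2) jN] .
  ultimately show ?thesis by (simp add: field_simps)
qed

lemma mutP_rev:
  assumes v: "0 < v" "v < 1" and w: "0 < w" "w < 1" and ij: "i \<le> N" "j \<le> N"
  shows "mutP N v w j i = (piw N v w i / piw N v w j) * mutP N v w i j"
proof -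
  define K1 where "K1 = {p \<in> {0..N - i} \<times> {0..i}. int (fst p) - int (snd p) = int j - int i}"
  define K2 where "K2 = {p \<in> {0..N - j} \<times> {0..j}. int (fst p) - int (snd p) = int i - int j}"
  have v1: "v \<noteq> 1" "w \<noteq> 1" using v w by auto
  have m1: "mutP N v w i j = (\<Sum>p\<in>K1. tt N v w i (fst p) (snd p))"
    unfolding mutP_tt[OF v1] K1_def by (rule dsum_if) auto
  have m2: "mutP N v w j i = (\<Sum>p\<in>K2. tt N v w j (fst p) (snd p))"
    unfolding mutP_tt[OF v1] K2_def by (rule dsum_if) auto
  have K2: "K2 = prod.swap ` K1"
  proof
    show "K2 \<subseteq> prod.swap ` K1"
    proof
      fix p assume p: "p \<in> K2"
      obtain l m where pe: "p = (l, m)" by (cases p)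
      have "(m, l) \<in> K1" using p ij unfolding K1_def K2_def pe by auto
      then show "p \<in> prod.swap ` K1" unfolding pe by (metis swap_simp image_eqI)
    qed
    show "prod.swap ` K1 \<subseteq> K2" using ij unfolding K1_def K2_def by auto
  qed
  have "mutP N v w j i = (\<Sum>p\<in>K1. tt N v w j (snd p) (fst p))"
    unfolding m2 K2 by (subst sum.reindex) (auto simp: case_prod_beta)
  also have "\<dots> = (\<Sum>p\<in>K1. (piw N v w i / piw N v w j) * tt N v w i (fst p) (snd p))"
    by (intro sum.cong refl ptw2) (use v w ij in \<open>auto simp: K1_def\<close>)
  also have "\<dots> = (piw N v w i / piw N v w j) * mutP N v w i j"
    unfolding m1 by (simp add: sum_distrib_left)
  finally show ?thesis .
qed

lemma sqrt_mutP:
  assumes v: "0 < v" "v < 1" and w: "0 < w" "w < 1" and ij: "i \<le> N" "j \<le> N"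
  shows "sqrt (mutP N v w i j * mutP N v w j i) =
    (\<Sum>l\<in>{0..N - i}. \<Sum>m\<in>{0..i}.
       if int l - int m = int j - int i then sqrt (tt N v w i l m * tt N v w j m l) else 0)"
proof -
  define \<rho> where "\<rho> = piw N v w i / piw N v w j"
  have r0: "0 < \<rho>" unfolding \<rho>_def using piw_pos v w ij by simp
  have v1: "v \<noteq> 1" "w \<noteq> 1" using v w by auto
  have P0: "0 \<le> mutP N v w i j"
    unfolding mutP_tt[OF v1] using v w by (intro sum_nonneg) (auto intro: tt_nonneg)
  have "sqrt (mutP N v w i j * mutP N v w j i) = sqrt \<rho> * mutP N v w i j"
    unfolding mutP_rev[OF assms] \<rho>_def[symmetric] using P0 r0
    by (simp add: real_sqrt_mult mult_ac)
  also have "\<dots> = (\<Sum>l\<in>{0..N - i}. \<Sum>m\<in>{0..i}.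
       sqrt \<rho> * (if int l - int m = int j - int i then tt N v w i l m else 0))"
    unfolding mutP_tt[OF v1] by (simp add: sum_distrib_left)
  also have "\<dots> = (\<Sum>l\<in>{0..N - i}. \<Sum>m\<in>{0..i}.
       if int l - int m = int j - int i then sqrt (tt N v w i l m * tt N v w j m l) else 0)"
  proof (intro sum.cong refl)
    fix l m assume l: "l \<in> {0..N - i}" and m: "m \<in> {0..i}"
    show "sqrt \<rho> * (if int l - int m = int j - int i then tt N v w i l m else 0) =
       (if int l - int m = int j - int i then sqrt (tt N v w i l m * tt N v w j m l) else 0)"
    proof (cases "int l - int m = int j - int i")
      case True
      have t: "tt N v w j m l = \<rho> * tt N v w i l m"
        unfolding \<rho>_def by (rule ptw2) (use v w ij l m True in auto)
      have t0: "0 \<le> tt N v w i l m" using v w by (intro tt_nonneg) auto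
      have "sqrt (tt N v w i l m * tt N v w j m l) = sqrt (tt N v w i l m * tt N v w i l m) * sqrt \<rho>"
        unfolding t by (metis mult.commute mult.left_commute real_sqrt_mult)
      also have "\<dots> = sqrt \<rho> * tt N v w i l m" using t0 by simp
      finally show ?thesis using True by simp
    qed simp
  qed
  finally show ?thesis .
qed



lemma binom_real: "real (n choose k) \<le> real n ^ k / fact k"
proof -
  have "real ((n choose k) * fact k) \<le> real (n ^ k)" using binomial_fact_pow[of n k] by (rule of_nat_mono)
  then have "real (n choose k) * fact k \<le> real n ^ k" by (simp add: of_nat_mult)
  then show ?thesis by (simp add: field_simps)
qed

lemma Q1:
  fixes n x L \<mu> \<nu> :: real
  assumes "0 < n" "0 \<le> x" "x \<le> n" "0 \<le> L" "0 < \<mu>" "0 < \<nu>"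
  shows "(n - x) * (x + L) * ((\<mu> / n) * (\<nu> / n)) \<le> \<mu> * (1 - x / n) * (\<nu> * (x / n)) + \<mu> * \<nu> * (L / n)"
proof -
  have "(n - x) * (x + L) * ((\<mu> / n) * (\<nu> / n)) = \<mu> * \<nu> * ((n - x) * x + (n - x) * L) / n^2"
    by (simp add: field_simps power2_eq_square)
  also have "\<dots> \<le> \<mu> * \<nu> * ((n - x) * x + n * L) / n^2"
    using assms by (intro divide_right_mono mult_left_mono add_left_mono mult_right_mono) auto
  also have "\<dots> = \<mu> * (1 - x / n) * (\<nu> * (x / n)) + \<mu> * \<nu> * (L / n)"
    using assms by (simp add: field_simps power2_eq_square)
  finally show ?thesis .
qed

lemma Q2:
  fixes n x M \<mu> \<nu> :: real
  assumes "0 < n" "0 \<le> x" "x \<le> n" "0 \<le> M" "0 < \<mu>" "0 < \<nu>"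
  shows "x * ((n - x) + M) * ((\<mu> / n) * (\<nu> / n)) \<le> \<mu> * (1 - x / n) * (\<nu> * (x / n)) + \<mu> * \<nu> * (M / n)"
proof -
  have "x * ((n - x) + M) * ((\<mu> / n) * (\<nu> / n)) = \<mu> * \<nu> * ((n - x) * x + x * M) / n^2"
    by (simp add: field_simps power2_eq_square)
  also have "\<dots> \<le> \<mu> * \<nu> * ((n - x) * x + n * M) / n^2"
    using assms by (intro divide_right_mono mult_left_mono add_left_mono mult_right_mono) auto
  also have "\<dots> = \<mu> * (1 - x / n) * (\<nu> * (x / n)) + \<mu> * \<nu> * (M / n)"
    using assms by (simp add: field_simps power2_eq_square)
  finally show ?thesis .
qed

lemma sq_sum_ge: "0 \<le> a \<Longrightarrow> 0 \<le> b \<Longrightarrow> a^2 + b^2 \<le> (a + b :: real)^2"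
  by (simp add: power2_eq_square algebra_simps)

lemma one_minus_le_exp_pow:
  fixes v :: real assumes "v \<le> 1"
  shows "(1 - v) ^ k \<le> exp (- (v * real k))"
proof -
  have "(1 - v) ^ k \<le> exp (- v) ^ k"
    using assms exp_ge_add_one_self[of "- v"] by (intro power_mono) auto
  also have "\<dots> = exp (- (v * real k))" by (simp add: exp_of_nat_mult[symmetric] mult_ac)
  finally show ?thesis .
qed



lemma Fbound:
  fixes \<mu> \<nu> :: real and N i l m :: nat
  assumes mu: "0 < \<mu>" and nu: "0 < \<nu>" and Nmu: "\<mu> < real N" and Nnu: "\<nu> < real N"
    and iN: "i \<le> N" and lN: "l \<le> N - i" and mi: "m \<le> i"
  defines "z \<equiv> real i / real N"
  defines "S \<equiv> sqrt (\<mu> * (1 - z)) * sqrt (\<nu> * z)"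
  defines "B \<equiv> sqrt (\<mu> * \<nu>)"
  shows "sqrt (tt N (\<mu> / real N) (\<nu> / real N) i l m * tt N (\<mu> / real N) (\<nu> / real N) (i + l - m) m l)
    \<le> exp (- (\<mu> * (1 - z) + \<nu> * z))
       * (((S + B * sqrt (real l / real N)) * exp (\<mu> / real N)) ^ l / fact l)
       * (((S + B * sqrt (real m / real N)) * exp (\<nu> / real N)) ^ m / fact m)"
proof -
  define v where "v = \<mu> / real N"
  define w where "w = \<nu> / real N"
  define j where "j = i + l - m"
  define q where "q = S + B * sqrt (real l / real N)"
  define r where "r = S + B * sqrt (real m / real N)"
  have Npos: "0 < real N" using mu Nmu by linarith
  have v0: "0 \<le> v" "v \<le> 1" unfolding v_def using mu Nmu by auto
  have w0: "0 \<le> w" "w \<le> 1" unfolding w_def using nu Nnu by auto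
  have z0: "0 \<le> z" "z \<le> 1" unfolding z_def using iN Npos by auto
  have S0: "0 \<le> S" unfolding S_def using z0 mu nu by simp
  have B0: "0 \<le> B" unfolding B_def using mu nu by simp
  have q0: "0 \<le> q" unfolding q_def using S0 B0 by simp
  have r0: "0 \<le> r" unfolding r_def using S0 B0 by simp
  have S2: "S^2 = \<mu> * (1 - z) * (\<nu> * z)" unfolding S_def using z0 mu nu
    by (simp add: power_mult_distrib)
  have nat1: "N - j - m = N - i - l" "j - l = i - m" unfolding j_def using lN mi by auto
  have jle: "real j \<le> real i + real l" unfolding j_def using mi by simp
  have Njle: "real (N - j) \<le> real (N - i) + real m" unfolding j_def using mi lN by simp
  have Ni: "real (N - i) = real N - real i" using iN by simp
  define X where "X = real ((N - i) choose l) * real (j choose l) * (v * w) ^ l"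
  define Y where "Y = real (i choose m) * real ((N - j) choose m) * (v * w) ^ m"
  define Z1 where "Z1 = (1 - v) ^ (N - i - l)"
  define Z2 where "Z2 = (1 - w) ^ (i - m)"
  have prod: "tt N v w i l m * tt N v w j m l = X * Y * Z1^2 * Z2^2"
    unfolding tt_def X_def Y_def Z1_def Z2_def nat1
    by (simp add: power_mult_distrib power2_eq_square mult_ac)
  have QX: "real (N - i) * (real i + real l) * (v * w) \<le> q^2"
  proof -
    have "real (N - i) * (real i + real l) * (v * w)
          \<le> \<mu> * (1 - real i / real N) * (\<nu> * (real i / real N)) + \<mu> * \<nu> * (real l / real N)"
      unfolding Ni v_def w_def using Q1[OF Npos _ _ _ mu nu, of "real i" "real l"] iN by simp
    also have "\<dots> = S^2 + (B * sqrt (real l / real N))^2"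
      unfolding S2 z_def B_def using mu nu Npos by (simp add: power_mult_distrib)
    also have "\<dots> \<le> q^2" unfolding q_def using S0 B0 by (intro sq_sum_ge) auto
    finally show ?thesis .
  qed
  have Xb: "X \<le> (q ^ l / fact l)^2"
  proof -
    have "X \<le> (real (N - i) ^ l / fact l) * ((real i + real l) ^ l / fact l) * (v * w) ^ l"
      unfolding X_def
    proof (intro mult_right_mono mult_mono)
      show "real (N - i choose l) \<le> real (N - i) ^ l / fact l" by (rule binom_real)
      have "real (j choose l) \<le> real j ^ l / fact l" by (rule binom_real)
      also have "\<dots> \<le> (real i + real l) ^ l / fact l"
        using jle by (intro divide_right_mono power_mono) auto
      finally show "real (j choose l) \<le> (real i + real l) ^ l / fact l" .
    qed (use v0 w0 in auto)
    also have "\<dots> = (real (N - i) * (real i + real l) * (v * w)) ^ l / (fact l)^2"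
      by (simp add: power_mult_distrib power2_eq_square)
    also have "\<dots> \<le> (q^2) ^ l / (fact l)^2"
      using QX v0 w0 by (intro divide_right_mono power_mono) auto
    also have "\<dots> = (q ^ l / fact l)^2" by (simp add: power_divide power_mult[symmetric] mult.commute flip: power_mult)
    finally show ?thesis .
  qed
  have QY: "real i * (real (N - i) + real m) * (v * w) \<le> r^2"
  proof -
    have "real i * (real (N - i) + real m) * (v * w)
          \<le> \<mu> * (1 - real i / real N) * (\<nu> * (real i / real N)) + \<mu> * \<nu> * (real m / real N)"
      unfolding Ni v_def w_def using Q2[OF Npos _ _ _ mu nu, of "real i" "real m"] iN by simp
    also have "\<dots> = S^2 + (B * sqrt (real m / real N))^2"
      unfolding S2 z_def B_def using mu nu Npos by (simp add: power_mult_distrib)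
    also have "\<dots> \<le> r^2" unfolding r_def using S0 B0 by (intro sq_sum_ge) auto
    finally show ?thesis .
  qed
  have Yb: "Y \<le> (r ^ m / fact m)^2"
  proof -
    have "Y \<le> (real i ^ m / fact m) * ((real (N - i) + real m) ^ m / fact m) * (v * w) ^ m"
      unfolding Y_def
    proof (intro mult_right_mono mult_mono)
      show "real (i choose m) \<le> real i ^ m / fact m" by (rule binom_real)
      have "real ((N - j) choose m) \<le> real (N - j) ^ m / fact m" by (rule binom_real)
      also have "\<dots> \<le> (real (N - i) + real m) ^ m / fact m"
        using Njle by (intro divide_right_mono power_mono) auto
      finally show "real ((N - j) choose m) \<le> (real (N - i) + real m) ^ m / fact m" .
    qed (use v0 w0 in auto)
    also have "\<dots> = (real i * (real (N - i) + real m) * (v * w)) ^ m / (fact m)^2"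
      by (simp add: power_mult_distrib power2_eq_square)
    also have "\<dots> \<le> (r^2) ^ m / (fact m)^2"
      using QY v0 w0 by (intro divide_right_mono power_mono) auto
    also have "\<dots> = (r ^ m / fact m)^2" by (simp add: power_divide power_mult[symmetric] mult.commute flip: power_mult)
    finally show ?thesis .
  qed
  have Z1b: "Z1 \<le> exp (- (\<mu> * (1 - z))) * exp (\<mu> / real N) ^ l"
  proof -
    have "Z1 \<le> exp (- (v * real (N - i - l)))" unfolding Z1_def by (rule one_minus_le_exp_pow[OF v0(2)])
    also have "- (v * real (N - i - l)) = - (\<mu> * (1 - z)) + real l * (\<mu> / real N)"
      unfolding v_def z_def using lN iN Npos by (simp add: of_nat_diff field_simps)
    also have "exp \<dots> = exp (- (\<mu> * (1 - z))) * exp (\<mu> / real N) ^ l"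
      by (simp only: exp_add exp_of_nat_mult)
    finally show ?thesis .
  qed
  have Z2b: "Z2 \<le> exp (- (\<nu> * z)) * exp (\<nu> / real N) ^ m"
  proof -
    have "Z2 \<le> exp (- (w * real (i - m)))" unfolding Z2_def by (rule one_minus_le_exp_pow[OF w0(2)])
    also have "- (w * real (i - m)) = - (\<nu> * z) + real m * (\<nu> / real N)"
      unfolding w_def z_def using mi Npos by (simp add: of_nat_diff field_simps)
    also have "exp \<dots> = exp (- (\<nu> * z)) * exp (\<nu> / real N) ^ m"
      by (simp only: exp_add exp_of_nat_mult)
    finally show ?thesis .
  qed
  have X0: "0 \<le> X" unfolding X_def using v0 w0 by simp
  have Y0: "0 \<le> Y" unfolding Y_def using v0 w0 by simp
  have Z10: "0 \<le> Z1" unfolding Z1_def using v0 by simp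
  have Z20: "0 \<le> Z2" unfolding Z2_def using w0 by simp
  define T where "T = exp (- (\<mu> * (1 - z) + \<nu> * z))
       * ((q * exp (\<mu> / real N)) ^ l / fact l)
       * ((r * exp (\<nu> / real N)) ^ m / fact m)"
  have T0: "0 \<le> T" unfolding T_def using q0 r0 by simp
  have E: "exp (- (\<mu> * (1 - z) + \<nu> * z)) = exp (- (\<mu> * (1 - z))) * exp (- (\<nu> * z))"
    by (simp only: minus_add_distrib exp_add)
  have "X * Y * Z1^2 * Z2^2 \<le> (q ^ l / fact l)^2 * (r ^ m / fact m)^2
          * (exp (- (\<mu> * (1 - z))) * exp (\<mu> / real N) ^ l)^2 * (exp (- (\<nu> * z)) * exp (\<nu> / real N) ^ m)^2"
    using Xb Yb Z1b Z2b X0 Y0 Z10 Z20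
    by (intro mult_mono power_mono) auto
  also have "\<dots> = T^2"
    unfolding T_def E by (simp add: power_mult_distrib power_divide mult_ac)
  finally have "tt N v w i l m * tt N v w j m l \<le> T^2" using prod by simp
  then have "sqrt (tt N v w i l m * tt N v w j m l) \<le> sqrt (T^2)" by (rule real_sqrt_le_mono)
  also have "\<dots> = T" using T0 by simp
  finally show ?thesis unfolding T_def v_def w_def j_def q_def r_def .
qed



lemma collapse:
  assumes "i \<le> N" "l \<le> N - i" "m \<le> i"
  shows "(\<Sum>j\<in>{0..N}. if int l - int m = int j - int i then f j else (0::real)) = f (i + l - m)"
proof -
  have "(\<Sum>j\<in>{0..N}. if int l - int m = int j - int i then f j else (0::real))
      = (\<Sum>j\<in>{0..N}. if j = i + l - m then f (i + l - m) else 0)"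
    by (intro sum.cong refl) (use assms in auto)
  also have "\<dots> = f (i + l - m)" using assms by (simp add: sum.delta)
  finally show ?thesis .
qed

lemma gfun_eq:
  assumes "0 \<le> \<mu>" "0 \<le> \<nu>" "0 \<le> z" "z \<le> 1"
  shows "gfun \<mu> \<nu> z = \<mu> * (1 - z) + \<nu> * z - 2 * (sqrt (\<mu> * (1 - z)) * sqrt (\<nu> * z))"
  unfolding gfun_def power2_diff using assms by simp

theorem proposition5:
  fixes \<mu> \<nu> :: real
  assumes "\<mu> > 0" and "\<nu> > 0"
  shows "\<exists>C::real. \<forall>N::nat. real N > max \<mu> \<nu> \<longrightarrow>
           (\<forall>i\<in>{0..N}.
              (\<Sum>j\<in>{0..N}. sqrt (mutP N (\<mu> / real N) (\<nu> / real N) i j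
                                  * mutP N (\<mu> / real N) (\<nu> / real N) j i))
              \<le> exp (- gfun \<mu> \<nu> (real i / real N)) + C / sqrt (real N))"
proof -
  have mu: "0 < \<mu>" and nu: "0 < \<nu>" using assms by auto
  define B where "B = sqrt (\<mu> * \<nu>)"
  define K1 where "K1 = (B * exp 1 * \<mu> + B * exp 1) * exp (4 * (2 * B * exp 1 + 1))"
  define K2 where "K2 = (B * exp 1 * \<nu> + B * exp 1) * exp (4 * (2 * B * exp 1 + 1))"
  have B0: "0 \<le> B" unfolding B_def using mu nu by simp
  have K10: "0 \<le> K1" unfolding K1_def using B0 mu by simp
  have K20: "0 \<le> K2" unfolding K2_def using B0 nu by simp
  show ?thesis
  proof (intro exI allI impI ballI)
    fix N :: nat and i assume NM: "real N > max \<mu> \<nu>" and i: "i \<in> {0..N}"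
    have Nmu: "\<mu> < real N" and Nnu: "\<nu> < real N" using NM by auto
    have iN: "i \<le> N" using i by simp
    have Npos: "0 < real N" using Nmu mu by linarith
    have N0: "N > 0" using Npos by simp
    have sqN: "0 < sqrt (real N)" using Npos by simp
    have sqN1: "1 \<le> sqrt (real N)" using N0 by simp
    define v where "v = \<mu> / real N"
    define w where "w = \<nu> / real N"
    have v: "0 < v" "v < 1" unfolding v_def using mu Nmu Npos by auto
    have w: "0 < w" "w < 1" unfolding w_def using nu Nnu Npos by auto
    define z where "z = real i / real N"
    have z0: "0 \<le> z" "z \<le> 1" unfolding z_def using iN Npos by auto
    define S where "S = sqrt (\<mu> * (1 - z)) * sqrt (\<nu> * z)"
    have S0: "0 \<le> S" unfolding S_def using z0 mu nu by simp
    have SB: "S \<le> B"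
    proof -
      have "S = sqrt (\<mu> * \<nu> * ((1 - z) * z))" unfolding S_def by (simp add: real_sqrt_mult mult_ac)
      also have "\<dots> \<le> sqrt (\<mu> * \<nu> * 1)"
      proof -
        have "(1 - z) * z \<le> 1" using z0 by (intro mult_le_one) auto
        then show ?thesis using mu nu by (intro real_sqrt_le_mono mult_left_mono) auto
      qed
      finally show ?thesis unfolding B_def by simp
    qed
    define E where "E = exp (- (\<mu> * (1 - z) + \<nu> * z))"
    define A where "A = (\<lambda>l::nat. ((S + B * sqrt (real l / real N)) * exp (\<mu> / real N)) ^ l / fact l)"
    define Bm where "Bm = (\<lambda>m::nat. ((S + B * sqrt (real m / real N)) * exp (\<nu> / real N)) ^ m / fact m)"
    have "(\<Sum>j\<in>{0..N}. sqrt (mutP N v w i j * mutP N v w j i))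
        = (\<Sum>j\<in>{0..N}. \<Sum>l\<in>{0..N - i}. \<Sum>m\<in>{0..i}.
            if int l - int m = int j - int i then sqrt (tt N v w i l m * tt N v w j m l) else 0)"
      by (intro sum.cong refl sqrt_mutP v w iN) auto
    also have "\<dots> = (\<Sum>l\<in>{0..N - i}. \<Sum>m\<in>{0..i}. \<Sum>j\<in>{0..N}.
            if int l - int m = int j - int i then sqrt (tt N v w i l m * tt N v w j m l) else 0)"
      by (subst sum.swap) (simp add: sum.swap[of _ "{0..N}"])
    also have "\<dots> = (\<Sum>l\<in>{0..N - i}. \<Sum>m\<in>{0..i}. sqrt (tt N v w i l m * tt N v w (i + l - m) m l))"
      by (intro sum.cong refl collapse[OF iN]) auto
    also have "\<dots> \<le> (\<Sum>l\<in>{0..N - i}. \<Sum>m\<in>{0..i}. E * A l * Bm m)"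
      unfolding v_def w_def E_def A_def Bm_def S_def z_def B_def
      by (intro sum_mono Fbound mu nu Nmu Nnu iN) auto
    also have "\<dots> = E * (\<Sum>l\<in>{0..N - i}. A l) * (\<Sum>m\<in>{0..i}. Bm m)"
      by (simp add: sum_distrib_left sum_distrib_right mult_ac)
    also have "\<dots> \<le> E * (exp S + K1 / sqrt (real N)) * (exp S + K2 / sqrt (real N))"
    proof (intro mult_mono)
      show "(\<Sum>l\<in>{0..N - i}. A l) \<le> exp S + K1 / sqrt (real N)"
        unfolding A_def K1_def by (rule seriesA[OF S0 SB]) (use mu Nmu N0 in auto)
      show "(\<Sum>m\<in>{0..i}. Bm m) \<le> exp S + K2 / sqrt (real N)"
        unfolding Bm_def K2_def by (rule seriesA[OF S0 SB]) (use nu Nnu N0 iN in auto)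
      show "0 \<le> E * (exp S + K1 / sqrt (real N))" unfolding E_def using K10 sqN by simp
      show "0 \<le> (\<Sum>m\<in>{0..i}. Bm m)" unfolding Bm_def using S0 B0 by (intro sum_nonneg) simp
      show "0 \<le> E" unfolding E_def by simp
      show "0 \<le> (\<Sum>l\<in>{0..N - i}. A l)" unfolding A_def using S0 B0 by (intro sum_nonneg) simp
    qed simp
    also have "\<dots> \<le> exp (- gfun \<mu> \<nu> z) + (exp B * (K1 + K2) + K1 * K2) / sqrt (real N)"
    proof -
      define a where "a = K1 / sqrt (real N)"
      define b where "b = K2 / sqrt (real N)"
      have a0: "0 \<le> a" and b0: "0 \<le> b" unfolding a_def b_def using K10 K20 sqN by auto
      have Eg: "E * exp S * exp S = exp (- gfun \<mu> \<nu> z)"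
        unfolding E_def gfun_eq[OF less_imp_le[OF mu] less_imp_le[OF nu] z0] S_def
        by (simp flip: exp_add)
      have p1: "0 \<le> \<mu> * (1 - z)" using mu z0 by simp
      have p2: "0 \<le> \<nu> * z" using nu z0 by simp
      have E1: "E \<le> 1" and E0: "0 \<le> E" unfolding E_def using p1 p2 by auto
      have eS: "exp S \<le> exp B" using SB by simp
      have ab: "a * b \<le> K1 * K2 / sqrt (real N)"
      proof -
        have "a * b = K1 * K2 / (sqrt (real N) * sqrt (real N))" unfolding a_def b_def by simp
        also have "\<dots> \<le> K1 * K2 / sqrt (real N)"
          using K10 K20 sqN sqN1 N0 by (intro divide_left_mono) (auto intro: sqrt_le_self1)
        finally show ?thesis .
      qed
      have "E * (exp S + a) * (exp S + b) = E * exp S * exp S + E * (exp S * (a + b) + a * b)"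
        by (simp add: algebra_simps)
      also have "\<dots> \<le> exp (- gfun \<mu> \<nu> z) + 1 * (exp B * (a + b) + K1 * K2 / sqrt (real N))"
        unfolding Eg using E1 E0 eS a0 b0 ab
        by (intro add_left_mono mult_mono add_mono mult_right_mono) auto
      also have "\<dots> = exp (- gfun \<mu> \<nu> z) + (exp B * (K1 + K2) + K1 * K2) / sqrt (real N)"
        unfolding a_def b_def by (simp add: algebra_simps add_divide_distrib)
      finally show ?thesis unfolding a_def b_def .
    qed
    finally show "(\<Sum>j\<in>{0..N}. sqrt (mutP N (\<mu> / real N) (\<nu> / real N) i j
                                  * mutP N (\<mu> / real N) (\<nu> / real N) j i))
              \<le> exp (- gfun \<mu> \<nu> (real i / real N)) + (exp B * (K1 + K2) + K1 * K2) / sqrt (real N)"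
      unfolding v_def w_def z_def .
  qed
qed


end
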